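(* Let $D$ be a diagram of a knot $K$, let $n=\omega(D)$ be its Wirtinger number, and let $E=\{e_1,\dots,e_n\}$ be a generating set of seeds for $D$ with $n$ elements. For each finite Coxeter group $H$ with $r(H)=n$, fix a robust subset $\mathcal{A}_H\subseteq \mathrm{Gen}(H)$. Consider the following search: for every finite Coxeter group $H$ with $r(H)=n$, every $R\in\mathcal{A}_H$ and every bijection $f:E\to R$, label each seed $e_i$ by $f(e_i)$, extend the labeling along a complete coloring sequence starting from $E$ (at each coloring move with overstrand $o$ and understrands $u_1,u_2$, where $u_2$ is the newly colored strand, set the label of $u_2$ to $g_o g_{u_1} g_o$), and then test whether the resulting labeling of all strands is an $H$-coloring of $D$. Then $D$ exhibits a maximal rank quotient onto a finite Coxeter group, i.e. there is a finite Coxeter group $H$ with $r(H)=\omega(D)$ and a surjective homomorphism $\pi_1(S^3\setminus K)\twoheadrightarrow H$ sending meridians to reflections, if and only if this search finds some $H$, $R$ and $f$ for which the test succeeds. Moreover, the search succeeds for a given $H$ exactly when such a surjection onto that $H$ exists.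
   Context: A Coxeter group $C(\Gamma)$ is given by a finite simple graph $\Gamma$ with edges labeled by integers $>1$. It is generated by elements in bijection with the vertices of $\Gamma$, subject to the relations $s^2=1$ for every generator $s$ and $(st)^k=1$ whenever $s,t$ are joined by an edge of weight $k$. A reflection is any element conjugate to one of these generators. The Coxeter rank $r(G)$ is the minimal cardinality of a generating set of $G$ consisting of reflections. A homomorphism from a knot group to a Coxeter group is called good if it maps meridians to reflections. Diagram notions. The strands of a diagram $D$ are its arcs, i.e. the overstrands between undercrossings. At a crossing $c$ let $o$ be the overstrand and $u_1,u_2$ the two understrands. Given a set $W$ of "colored" strands, a coloring move at $c$ is possible when $o,u_1\in W$ and $u_2\notin W$; it replaces $W$ by $W\cup\{u_2\}$. A set of $n$ strands is a generating set of seeds if some sequence of coloring moves starting from it colors every strand of $D$; such a sequence is a complete coloring sequence. The Wirtinger number $\omega(D)$ is the smallest size of a generating set of seeds for $D$. For a group $G$, a $G$-coloring of $D$ by reflections is an assignment $s\mapsto g_s$ of a reflection $g_s\in G$ to each strand $s$ such that at every crossing with overstrand $o$ and understrands $u_1,u_2$ one has $g_o g_{u_1} g_o^{-1}=g_{u_2}$. Since reflections are involutions, this condition does not depend on orientations. Robust sets. $\mathrm{Gen}(H)$ is the set of all generating sets of $H$ that consist of exactly $r(H)$ reflections. Two such sets $\{r_i\}$ and $\{\rho_i\}$ are equivalent if there is $g\in H$ with $\{g^{-1}r_ig\}=\{\rho_i\}$. A subset $\mathcal{A}\subseteq\mathrm{Gen}(H)$ is robust if it contains at least one member of every equivalence class.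 *)

theory Defs
  imports "HOL-Algebra.Algebra"
begin

text \<open>Words over generators Gs: letters (x, True) = x, (x, False) = x^-1.
  One rewriting step deletes a relator or a cancelling pair x x^-1 from a word.\<close>

definition pres_step :: "'g set \<Rightarrow> ('g \<times> bool) list set \<Rightarrow> ('g \<times> bool) list \<Rightarrow> ('g \<times> bool) list \<Rightarrow> bool" where
  "pres_step Gs R u v \<longleftrightarrow>
     (\<exists>xs ys r. u = xs @ r @ ys \<and> v = xs @ ys \<and>
        (r \<in> R \<or> (\<exists>x b. x \<in> Gs \<and> r = [(x, b), (x, \<not> b)])))"

definition pres_eq :: "'g set \<Rightarrow> ('g \<times> bool) list set \<Rightarrow> ('g \<times> bool) list \<Rightarrow> ('g \<times> bool) list \<Rightarrow> bool" where
  "pres_eq Gs R = equivclp (pres_step Gs R)"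

definition pres_class :: "'g set \<Rightarrow> ('g \<times> bool) list set \<Rightarrow> ('g \<times> bool) list \<Rightarrow> ('g \<times> bool) list set" where
  "pres_class Gs R w = {v. pres_eq Gs R w v}"

definition presented_group :: "'g set \<Rightarrow> ('g \<times> bool) list set \<Rightarrow> ('g \<times> bool) list set monoid" where
  "presented_group Gs R =
     \<lparr> carrier = pres_class Gs R ` lists (Gs \<times> UNIV),
       monoid.mult = (\<lambda>A B. {v. \<exists>a\<in>A. \<exists>b\<in>B. pres_eq Gs R (a @ b) v}),
       one = pres_class Gs R [] \<rparr>"

definition pres_gen :: "'g set \<Rightarrow> ('g \<times> bool) list set \<Rightarrow> 'g \<Rightarrow> ('g \<times> bool) list set" where
  "pres_gen Gs R x = pres_class Gs R [(x, True)]"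

text \<open>A Coxeter graph: finite vertex set V (vertices are naturals), weight function m,
  symmetric; distinct s t in V are joined by an edge of weight m s t iff m s t > 1.\<close>
definition coxeter_graph :: "nat set \<Rightarrow> (nat \<Rightarrow> nat \<Rightarrow> nat) \<Rightarrow> bool" where
  "coxeter_graph V m \<longleftrightarrow> finite V \<and> (\<forall>s t. m s t = m t s)"

definition cox_rels :: "nat set \<Rightarrow> (nat \<Rightarrow> nat \<Rightarrow> nat) \<Rightarrow> (nat \<times> bool) list set" where
  "cox_rels V m =
     {[(s, True), (s, True)] | s. s \<in> V} \<union>
     {concat (replicate (m s t) [(s, True), (t, True)]) | s t. s \<in> V \<and> t \<in> V \<and> s \<noteq> t \<and> m s t > 1}"

definition cox_group :: "nat set \<Rightarrow> (nat \<Rightarrow> nat \<Rightarrow> nat) \<Rightarrow> (nat \<times> bool) list set monoid" where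
  "cox_group V m = presented_group V (cox_rels V m)"

definition reflections :: "nat set \<Rightarrow> (nat \<Rightarrow> nat \<Rightarrow> nat) \<Rightarrow> (nat \<times> bool) list set set" where
  "reflections V m =
     {g \<otimes>\<^bsub>cox_group V m\<^esub> pres_gen V (cox_rels V m) s \<otimes>\<^bsub>cox_group V m\<^esub> inv\<^bsub>cox_group V m\<^esub> g
       | g s. g \<in> carrier (cox_group V m) \<and> s \<in> V}"

definition coxeter_rank :: "('a, 'b) monoid_scheme \<Rightarrow> 'a set \<Rightarrow> nat" where
  "coxeter_rank H Rfl =
     (LEAST k. \<exists>T. T \<subseteq> Rfl \<and> finite T \<and> card T = k \<and> generate H T = carrier H)"

definition Gen_sets :: "('a, 'b) monoid_scheme \<Rightarrow> 'a set \<Rightarrow> 'a set set" where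
  "Gen_sets H Rfl =
     {T. T \<subseteq> Rfl \<and> finite T \<and> card T = coxeter_rank H Rfl \<and> generate H T = carrier H}"

definition gen_equiv :: "('a, 'b) monoid_scheme \<Rightarrow> 'a set \<Rightarrow> 'a set \<Rightarrow> bool" where
  "gen_equiv H R1 R2 \<longleftrightarrow> (\<exists>g \<in> carrier H. (\<lambda>r. inv\<^bsub>H\<^esub> g \<otimes>\<^bsub>H\<^esub> r \<otimes>\<^bsub>H\<^esub> g) ` R1 = R2)"

definition robust :: "('a, 'b) monoid_scheme \<Rightarrow> 'a set \<Rightarrow> 'a set set \<Rightarrow> bool" where
  "robust H Rfl \<A> \<longleftrightarrow> \<A> \<subseteq> Gen_sets H Rfl \<and>
     (\<forall>R \<in> Gen_sets H Rfl. \<exists>R' \<in> \<A>. gen_equiv H R R')"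

text \<open>A knot diagram with N crossings is encoded by the list cr of length N: traversing the
  oriented knot, the i-th undercrossing met is crossing i, with overstrand fst (cr ! i) and sign
  snd (cr ! i); the strands (arcs) are 0..<max 1 N, strand i runs from undercrossing i-1 to
  undercrossing i, so crossing i has understrands i and (i+1) mod N.\<close>
definition num_strands :: "(nat \<times> bool) list \<Rightarrow> nat" where
  "num_strands cr = max 1 (length cr)"

definition strands :: "(nat \<times> bool) list \<Rightarrow> nat set" where
  "strands cr = {0..<num_strands cr}"

definition knot_diagram :: "(nat \<times> bool) list \<Rightarrow> bool" where
  "knot_diagram cr \<longleftrightarrow> (\<forall>c \<in> set cr. fst c < num_strands cr)"

text \<open>Crossings as triples (overstrand, understrand, understrand).\<close>
definition crossings :: "(nat \<times> bool) list \<Rightarrow> (nat \<times> nat \<times> nat) set" where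
  "crossings cr = {(fst (cr ! i), i, Suc i mod length cr) | i. i < length cr}"

definition moves :: "(nat \<times> bool) list \<Rightarrow> (nat \<times> nat \<times> nat) set" where
  "moves cr = crossings cr \<union> {(ov, u2, u1) | ov u1 u2. (ov, u1, u2) \<in> crossings cr}"

fun valid_seq :: "(nat \<times> bool) list \<Rightarrow> nat set \<Rightarrow> (nat \<times> nat \<times> nat) list \<Rightarrow> bool" where
  "valid_seq cr W [] = True"
| "valid_seq cr W ((ov, u1, u2) # \<sigma>) \<longleftrightarrow>
     (ov, u1, u2) \<in> moves cr \<and> ov \<in> W \<and> u1 \<in> W \<and> u2 \<notin> W \<and> valid_seq cr (insert u2 W) \<sigma>"

definition complete_seq :: "(nat \<times> bool) list \<Rightarrow> nat set \<Rightarrow> (nat \<times> nat \<times> nat) list \<Rightarrow> bool" where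
  "complete_seq cr E \<sigma> \<longleftrightarrow> E \<subseteq> strands cr \<and> valid_seq cr E \<sigma> \<and>
     E \<union> set (map (\<lambda>(ov, u1, u2). u2) \<sigma>) = strands cr"

definition gen_seeds :: "(nat \<times> bool) list \<Rightarrow> nat set \<Rightarrow> bool" where
  "gen_seeds cr E \<longleftrightarrow> (\<exists>\<sigma>. complete_seq cr E \<sigma>)"

definition wirtinger_number :: "(nat \<times> bool) list \<Rightarrow> nat" where
  "wirtinger_number cr = (LEAST k. \<exists>E. gen_seeds cr E \<and> finite E \<and> card E = k)"

text \<open>Knot group via the Wirtinger presentation of the diagram:
  relator x_{i+1}^-1 x_o^e x_i x_o^-e at crossing i.\<close>
definition wirt_rels :: "(nat \<times> bool) list \<Rightarrow> (nat \<times> bool) list set" where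
  "wirt_rels cr = {[(Suc i mod length cr, False), (fst (cr ! i), snd (cr ! i)), (i, True),
                    (fst (cr ! i), \<not> snd (cr ! i))] | i. i < length cr}"

definition knot_group :: "(nat \<times> bool) list \<Rightarrow> (nat \<times> bool) list set monoid" where
  "knot_group cr = presented_group (strands cr) (wirt_rels cr)"

definition meridians :: "(nat \<times> bool) list \<Rightarrow> (nat \<times> bool) list set set" where
  "meridians cr =
     {g \<otimes>\<^bsub>knot_group cr\<^esub> pres_class (strands cr) (wirt_rels cr) [(s, b)] \<otimes>\<^bsub>knot_group cr\<^esub> inv\<^bsub>knot_group cr\<^esub> g
       | g s b. g \<in> carrier (knot_group cr) \<and> s \<in> strands cr}"

definition good_surj :: "(nat \<times> bool) list \<Rightarrow> nat set \<Rightarrow> (nat \<Rightarrow> nat \<Rightarrow> nat)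
    \<Rightarrow> ((nat \<times> bool) list set \<Rightarrow> (nat \<times> bool) list set) \<Rightarrow> bool" where
  "good_surj cr V m h \<longleftrightarrow> h \<in> hom (knot_group cr) (cox_group V m) \<and>
     h ` meridians cr \<subseteq> reflections V m \<and>
     h ` carrier (knot_group cr) = carrier (cox_group V m)"

definition is_coloring :: "('a, 'b) monoid_scheme \<Rightarrow> 'a set \<Rightarrow> (nat \<times> bool) list \<Rightarrow> (nat \<Rightarrow> 'a) \<Rightarrow> bool" where
  "is_coloring H Rfl cr g \<longleftrightarrow> (\<forall>s \<in> strands cr. g s \<in> Rfl) \<and>
     (\<forall>(ov, u1, u2) \<in> crossings cr. g ov \<otimes>\<^bsub>H\<^esub> g u1 \<otimes>\<^bsub>H\<^esub> inv\<^bsub>H\<^esub> (g ov) = g u2)"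

fun extend_labels :: "('a, 'b) monoid_scheme \<Rightarrow> (nat \<Rightarrow> 'a) \<Rightarrow> (nat \<times> nat \<times> nat) list \<Rightarrow> (nat \<Rightarrow> 'a)" where
  "extend_labels H g [] = g"
| "extend_labels H g ((ov, u1, u2) # \<sigma>) = extend_labels H (g(u2 := g ov \<otimes>\<^bsub>H\<^esub> g u1 \<otimes>\<^bsub>H\<^esub> g ov)) \<sigma>"

definition search_succeeds :: "(nat \<times> bool) list \<Rightarrow> nat set \<Rightarrow> (nat \<times> nat \<times> nat) list
    \<Rightarrow> nat set \<Rightarrow> (nat \<Rightarrow> nat \<Rightarrow> nat) \<Rightarrow> (nat \<times> bool) list set set set \<Rightarrow> bool" where
  "search_succeeds cr E \<sigma> V m \<A> \<longleftrightarrow>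
     (\<exists>R \<in> \<A>. \<exists>f. bij_betw f E R \<and>
        is_coloring (cox_group V m) (reflections V m) cr
          (extend_labels (cox_group V m) (\<lambda>s. if s \<in> E then f s else \<one>\<^bsub>cox_group V m\<^esub>) \<sigma>))"

end

theory Submission
  imports Defs
begin


lemma pres_eq_refl[simp]: "pres_eq Gs R w w"
  unfolding pres_eq_def by simp

lemma pres_eq_sym: "pres_eq Gs R u v \<Longrightarrow> pres_eq Gs R v u"
  unfolding pres_eq_def by (simp add: equivclp_sym)

lemma pres_eq_trans: "pres_eq Gs R u v \<Longrightarrow> pres_eq Gs R v w \<Longrightarrow> pres_eq Gs R u w"
  unfolding pres_eq_def by (rule equivclp_trans)

lemma pres_step_eq: "pres_step Gs R u v \<Longrightarrow> pres_eq Gs R u v"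
  unfolding pres_eq_def by (rule r_into_equivclp)

lemma pres_step_ctx: "pres_step Gs R u v \<Longrightarrow> pres_step Gs R (a @ u @ b) (a @ v @ b)"
  unfolding pres_step_def
  by (metis append.assoc)

lemma pres_eq_ctx: "pres_eq Gs R u v \<Longrightarrow> pres_eq Gs R (a @ u @ b) (a @ v @ b)"
  unfolding pres_eq_def
proof (induction rule: equivclp_induct)
  case base then show ?case by simp
next
  case (step y z)
  then show ?case
    by (meson converse_r_into_equivclp equivclp_into_equivclp pres_step_ctx)
qed

lemma pres_eq_app: "pres_eq Gs R a a' \<Longrightarrow> pres_eq Gs R b b' \<Longrightarrow> pres_eq Gs R (a @ b) (a' @ b')"
  using pres_eq_ctx[of Gs R a a' "[]" b] pres_eq_ctx[of Gs R b b' a' "[]"]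
  by (auto intro: pres_eq_trans)

lemma pres_class_eq_iff: "pres_class Gs R a = pres_class Gs R b \<longleftrightarrow> pres_eq Gs R a b"
  unfolding pres_class_def
  by (auto dest: pres_eq_sym intro: pres_eq_trans)

lemma pres_class_mult:
  "monoid.mult (presented_group Gs R) (pres_class Gs R a) (pres_class Gs R b) = pres_class Gs R (a @ b)"
  unfolding presented_group_def pres_class_def
  by (auto intro: pres_eq_trans pres_eq_app pres_eq_sym) (meson pres_eq_refl)

definition winv :: "('g \<times> bool) list \<Rightarrow> ('g \<times> bool) list" where
  "winv w = rev (map (\<lambda>(x, b). (x, \<not> b)) w)"

lemma winv_lists: "w \<in> lists (Gs \<times> UNIV) \<Longrightarrow> winv w \<in> lists (Gs \<times> UNIV)"
  unfolding winv_def by auto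

lemma winv_cancel: "w \<in> lists (Gs \<times> UNIV) \<Longrightarrow> pres_eq Gs R (winv w @ w) []"
proof (induction w)
  case Nil then show ?case by (simp add: winv_def)
next
  case (Cons a w)
  obtain x b where a: "a = (x, b)" by force
  have x: "x \<in> Gs" using Cons a by auto
  have "winv (a # w) @ a # w = winv w @ [(x, \<not> b), (x, b)] @ w"
    by (simp add: winv_def a)
  moreover have "pres_eq Gs R (winv w @ [(x, \<not> b), (x, b)] @ w) (winv w @ [] @ w)"
    apply (rule pres_eq_ctx, rule pres_step_eq)
    unfolding pres_step_def using x
    by (rule_tac x="[]" in exI, rule_tac x="[]" in exI) (auto intro!: exI[of _ "\<not> b"])
  ultimately show ?case using Cons by (auto intro: pres_eq_trans)
qed

lemma presented_group_carrier: "carrier (presented_group Gs R) = pres_class Gs R ` lists (Gs \<times> UNIV)"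
  by (simp add: presented_group_def)

lemma presented_group_one: "\<one>\<^bsub>presented_group Gs R\<^esub> = pres_class Gs R []"
  by (simp add: presented_group_def)

lemma presented_group_group: "group (presented_group Gs R)"
proof (rule groupI)
  fix x y assume "x \<in> carrier (presented_group Gs R)" "y \<in> carrier (presented_group Gs R)"
  then obtain a b where "a \<in> lists (Gs \<times> UNIV)" "b \<in> lists (Gs \<times> UNIV)" "x = pres_class Gs R a" "y = pres_class Gs R b"
    unfolding presented_group_carrier by blast
  then have "x \<otimes>\<^bsub>presented_group Gs R\<^esub> y = pres_class Gs R (a @ b)" "a @ b \<in> lists (Gs \<times> UNIV)"
    by (simp_all add: pres_class_mult)
  then show "x \<otimes>\<^bsub>presented_group Gs R\<^esub> y \<in> carrier (presented_group Gs R)"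
    unfolding presented_group_carrier by blast
next
  show "\<one>\<^bsub>presented_group Gs R\<^esub> \<in> carrier (presented_group Gs R)"
    unfolding presented_group_carrier presented_group_one by blast
next
  fix x y z assume "x \<in> carrier (presented_group Gs R)" "y \<in> carrier (presented_group Gs R)"
     "z \<in> carrier (presented_group Gs R)"
  then obtain a b c where "x = pres_class Gs R a" "y = pres_class Gs R b" "z = pres_class Gs R c"
    unfolding presented_group_carrier by blast
  then show "x \<otimes>\<^bsub>presented_group Gs R\<^esub> y \<otimes>\<^bsub>presented_group Gs R\<^esub> z =
       x \<otimes>\<^bsub>presented_group Gs R\<^esub> (y \<otimes>\<^bsub>presented_group Gs R\<^esub> z)"
    by (simp only: pres_class_mult append_assoc)
next
  fix x assume "x \<in> carrier (presented_group Gs R)"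
  then obtain a where "x = pres_class Gs R a"
    unfolding presented_group_carrier by blast
  then show "\<one>\<^bsub>presented_group Gs R\<^esub> \<otimes>\<^bsub>presented_group Gs R\<^esub> x = x"
    by (simp only: presented_group_one pres_class_mult append_Nil)
next
  fix x assume "x \<in> carrier (presented_group Gs R)"
  then obtain w where w: "w \<in> lists (Gs \<times> UNIV)" "x = pres_class Gs R w"
    unfolding presented_group_carrier by blast
  have "pres_class Gs R (winv w) \<otimes>\<^bsub>presented_group Gs R\<^esub> x = \<one>\<^bsub>presented_group Gs R\<^esub>"
    unfolding w(2) presented_group_one pres_class_mult pres_class_eq_iff
    by (rule winv_cancel[OF w(1)])
  moreover have "pres_class Gs R (winv w) \<in> carrier (presented_group Gs R)"
    unfolding presented_group_carrier using winv_lists[OF w(1)] by blast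
  ultimately show "\<exists>y\<in>carrier (presented_group Gs R). y \<otimes>\<^bsub>presented_group Gs R\<^esub> x = \<one>\<^bsub>presented_group Gs R\<^esub>"
    by blast
qed



definition evalw :: "('a, 'c) monoid_scheme \<Rightarrow> ('g \<Rightarrow> 'a) \<Rightarrow> ('g \<times> bool) list \<Rightarrow> 'a" where
  "evalw H \<phi> w = foldr (\<lambda>(x, b) acc. (if b then \<phi> x else inv\<^bsub>H\<^esub> \<phi> x) \<otimes>\<^bsub>H\<^esub> acc) w \<one>\<^bsub>H\<^esub>"

lemma evalw_Nil[simp]: "evalw H \<phi> [] = \<one>\<^bsub>H\<^esub>" by (simp add: evalw_def)
lemma evalw_Cons[simp]: "evalw H \<phi> ((x, b) # w) = (if b then \<phi> x else inv\<^bsub>H\<^esub> \<phi> x) \<otimes>\<^bsub>H\<^esub> evalw H \<phi> w"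
  by (simp add: evalw_def)

context group begin

lemma evalw_closed: "(\<And>x. \<phi> x \<in> carrier G) \<Longrightarrow> evalw G \<phi> w \<in> carrier G"
  by (induction w) auto

lemma evalw_append: "(\<And>x. \<phi> x \<in> carrier G) \<Longrightarrow> evalw G \<phi> (a @ b) = evalw G \<phi> a \<otimes> evalw G \<phi> b"
  by (induction a) (auto simp: m_assoc evalw_closed)

lemma evalw_step:
  assumes phi: "\<And>x. \<phi> x \<in> carrier G" and rel: "\<And>r. r \<in> R \<Longrightarrow> evalw G \<phi> r = \<one>"
    and st: "pres_step Gs R u v"
  shows "evalw G \<phi> u = evalw G \<phi> v"
proof -
  obtain xs ys r where u: "u = xs @ r @ ys" and v: "v = xs @ ys"
    and r: "r \<in> R \<or> (\<exists>x b. x \<in> Gs \<and> r = [(x, b), (x, \<not> b)])"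
    using st unfolding pres_step_def by blast
  have "evalw G \<phi> r = \<one>"
    using r
  proof
    assume "r \<in> R" then show ?thesis by (rule rel)
  next
    assume "\<exists>x b. x \<in> Gs \<and> r = [(x, b), (x, \<not> b)]"
    then obtain x b where "r = [(x, b), (x, \<not> b)]" by blast
    then show ?thesis by (cases b) (simp_all add: phi m_assoc[symmetric])
  qed
  then show ?thesis using u v by (simp add: evalw_append phi evalw_closed)
qed

lemma evalw_eq:
  assumes phi: "\<And>x. \<phi> x \<in> carrier G" and rel: "\<And>r. r \<in> R \<Longrightarrow> evalw G \<phi> r = \<one>"
    and e: "pres_eq Gs R u v"
  shows "evalw G \<phi> u = evalw G \<phi> v"
  using e unfolding pres_eq_def
proof (induction rule: equivclp_induct)
  case base then show ?case by simp
next
  case (step y z)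
  from step(2) have "evalw G \<phi> y = evalw G \<phi> z"
  proof
    assume "pres_step Gs R y z" then show ?thesis using evalw_step[OF phi rel] by blast
  next
    assume "pres_step Gs R z y" then show ?thesis using evalw_step[OF phi rel] by (metis (no_types))
  qed
  then show ?case using step(3) by simp
qed

definition ind_hom :: "('g \<Rightarrow> 'a) \<Rightarrow> ('g \<times> bool) list set \<Rightarrow> 'a" where
  "ind_hom \<phi> A = evalw G \<phi> (SOME w. w \<in> A)"

lemma ind_hom_class:
  assumes phi: "\<And>x. \<phi> x \<in> carrier G" and rel: "\<And>r. r \<in> R \<Longrightarrow> evalw G \<phi> r = \<one>"
  shows "ind_hom \<phi> (pres_class Gs R w) = evalw G \<phi> w"
proof -
  have "w \<in> pres_class Gs R w" by (simp add: pres_class_def)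
  then have "(SOME v. v \<in> pres_class Gs R w) \<in> pres_class Gs R w" by (rule someI)
  then have "pres_eq Gs R w (SOME v. v \<in> pres_class Gs R w)" by (simp add: pres_class_def)
  then show ?thesis unfolding ind_hom_def using evalw_eq[OF phi rel] by metis
qed

lemma ind_hom_hom:
  assumes phi: "\<And>x. \<phi> x \<in> carrier G" and rel: "\<And>r. r \<in> R \<Longrightarrow> evalw G \<phi> r = \<one>"
  shows "ind_hom \<phi> \<in> hom (presented_group Gs R) G"
proof (rule homI)
  fix x assume "x \<in> carrier (presented_group Gs R)"
  then obtain w where "x = pres_class Gs R w" unfolding presented_group_carrier by blast
  then show "ind_hom \<phi> x \<in> carrier G"
    by (simp only: ind_hom_class[OF phi rel] evalw_closed[OF phi])
next
  fix x y assume "x \<in> carrier (presented_group Gs R)" "y \<in> carrier (presented_group Gs R)"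
  then obtain a b where "x = pres_class Gs R a" "y = pres_class Gs R b"
    unfolding presented_group_carrier by blast
  then show "ind_hom \<phi> (x \<otimes>\<^bsub>presented_group Gs R\<^esub> y) = ind_hom \<phi> x \<otimes> ind_hom \<phi> y"
    by (simp only: ind_hom_class[OF phi rel] evalw_append[OF phi] pres_class_mult)
qed

end

lemma pres_class_inv:
  assumes w: "w \<in> lists (Gs \<times> UNIV)"
  shows "inv\<^bsub>presented_group Gs R\<^esub> (pres_class Gs R w) = pres_class Gs R (winv w)"
proof -
  interpret group "presented_group Gs R" by (rule presented_group_group)
  show ?thesis
  proof (rule inv_equality)
    show "pres_class Gs R (winv w) \<otimes>\<^bsub>presented_group Gs R\<^esub> pres_class Gs R w = \<one>\<^bsub>presented_group Gs R\<^esub>"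
      unfolding presented_group_one pres_class_mult pres_class_eq_iff
      by (rule winv_cancel[OF w])
    show "pres_class Gs R w \<in> carrier (presented_group Gs R)"
      unfolding presented_group_carrier using w by blast
    show "pres_class Gs R (winv w) \<in> carrier (presented_group Gs R)"
      unfolding presented_group_carrier using winv_lists[OF w] by blast
  qed
qed



context group begin

lemma cancel_aux: "g \<in> carrier G \<Longrightarrow> z \<in> carrier G \<Longrightarrow> g \<otimes> (inv g \<otimes> z) = z"
  by (simp add: m_assoc[symmetric])

lemma cancel_aux2: "g \<in> carrier G \<Longrightarrow> z \<in> carrier G \<Longrightarrow> inv g \<otimes> (g \<otimes> z) = z"
  by (simp add: m_assoc[symmetric])

lemma conj_mult3:
  assumes "a \<in> carrier G" "b \<in> carrier G" "c \<in> carrier G" "g \<in> carrier G"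
  shows "inv g \<otimes> (a \<otimes> b \<otimes> c) \<otimes> g = (inv g \<otimes> a \<otimes> g) \<otimes> (inv g \<otimes> b \<otimes> g) \<otimes> (inv g \<otimes> c \<otimes> g)"
  using assms by (simp add: m_assoc cancel_aux)

lemma invol_flip:
  assumes "a \<in> carrier G" "b \<in> carrier G" "c \<in> carrier G" "a \<otimes> a = \<one>"
    and "b = a \<otimes> c \<otimes> a"
  shows "c = a \<otimes> b \<otimes> a"
proof -
  have "a \<otimes> b \<otimes> a = a \<otimes> (a \<otimes> c \<otimes> a) \<otimes> a" by (simp only: assms(5))
  also have "\<dots> = (a \<otimes> a) \<otimes> c \<otimes> (a \<otimes> a)" using assms(1-3) by (simp add: m_assoc)
  also have "\<dots> = \<one> \<otimes> c \<otimes> \<one>" by (simp only: assms(4))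
  finally show ?thesis using assms by simp
qed

lemma invol_inv: "a \<in> carrier G \<Longrightarrow> a \<otimes> a = \<one> \<Longrightarrow> inv a = a"
  using inv_equality by blast

end

section \<open>Coxeter groups\<close>

lemma cox_group_group: "group (cox_group V m)"
  unfolding cox_group_def by (rule presented_group_group)

lemma cox_gen_carrier: "s \<in> V \<Longrightarrow> pres_gen V (cox_rels V m) s \<in> carrier (cox_group V m)"
  unfolding cox_group_def presented_group_carrier pres_gen_def by auto

lemma cox_gen_invol: "s \<in> V \<Longrightarrow>
   pres_gen V (cox_rels V m) s \<otimes>\<^bsub>cox_group V m\<^esub> pres_gen V (cox_rels V m) s = \<one>\<^bsub>cox_group V m\<^esub>"
  unfolding cox_group_def presented_group_one pres_gen_def pres_class_mult pres_class_eq_iff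
  apply (rule pres_step_eq)
  unfolding pres_step_def cox_rels_def
  by (rule exI[of _ "[]"], rule exI[of _ "[]"]) auto

lemma refl_carrier: "r \<in> reflections V m \<Longrightarrow> r \<in> carrier (cox_group V m)"
proof -
  interpret C: group "cox_group V m" by (rule cox_group_group)
  show "r \<in> reflections V m \<Longrightarrow> r \<in> carrier (cox_group V m)"
    unfolding reflections_def using cox_gen_carrier by auto
qed

lemma refl_invol: "r \<in> reflections V m \<Longrightarrow> r \<otimes>\<^bsub>cox_group V m\<^esub> r = \<one>\<^bsub>cox_group V m\<^esub>"
proof -
  interpret C: group "cox_group V m" by (rule cox_group_group)
  assume "r \<in> reflections V m"
  then obtain g s where g: "g \<in> carrier (cox_group V m)" "s \<in> V"
    and r: "r = g \<otimes>\<^bsub>cox_group V m\<^esub> pres_gen V (cox_rels V m) s \<otimes>\<^bsub>cox_group V m\<^esub> inv\<^bsub>cox_group V m\<^esub> g"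
    unfolding reflections_def by blast
  let ?x = "pres_gen V (cox_rels V m) s"
  have x: "?x \<in> carrier (cox_group V m)" using cox_gen_carrier g by blast
  have "r \<otimes>\<^bsub>cox_group V m\<^esub> r = g \<otimes>\<^bsub>cox_group V m\<^esub> (?x \<otimes>\<^bsub>cox_group V m\<^esub> ?x) \<otimes>\<^bsub>cox_group V m\<^esub> inv\<^bsub>cox_group V m\<^esub> g"
    unfolding r using g x by (simp add: C.m_assoc C.cancel_aux C.cancel_aux2)
  also have "\<dots> = \<one>\<^bsub>cox_group V m\<^esub>" using cox_gen_invol[OF g(2)] g by simp
  finally show ?thesis .
qed

lemma refl_inv: "r \<in> reflections V m \<Longrightarrow> inv\<^bsub>cox_group V m\<^esub> r = r"
  using group.invol_inv[OF cox_group_group] refl_invol refl_carrier by blast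

lemma refl_conj:
  assumes r: "r \<in> reflections V m" and a: "a \<in> carrier (cox_group V m)"
  shows "a \<otimes>\<^bsub>cox_group V m\<^esub> r \<otimes>\<^bsub>cox_group V m\<^esub> inv\<^bsub>cox_group V m\<^esub> a \<in> reflections V m"
proof -
  interpret C: group "cox_group V m" by (rule cox_group_group)
  obtain g s where g: "g \<in> carrier (cox_group V m)" "s \<in> V"
    and r: "r = g \<otimes>\<^bsub>cox_group V m\<^esub> pres_gen V (cox_rels V m) s \<otimes>\<^bsub>cox_group V m\<^esub> inv\<^bsub>cox_group V m\<^esub> g"
    using assms unfolding reflections_def by blast
  let ?x = "pres_gen V (cox_rels V m) s"
  have x: "?x \<in> carrier (cox_group V m)" using cox_gen_carrier g by blast
  have "a \<otimes>\<^bsub>cox_group V m\<^esub> r \<otimes>\<^bsub>cox_group V m\<^esub> inv\<^bsub>cox_group V m\<^esub> a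
      = (a \<otimes>\<^bsub>cox_group V m\<^esub> g) \<otimes>\<^bsub>cox_group V m\<^esub> ?x \<otimes>\<^bsub>cox_group V m\<^esub> inv\<^bsub>cox_group V m\<^esub> (a \<otimes>\<^bsub>cox_group V m\<^esub> g)"
    unfolding r using g x a by (simp add: C.m_assoc C.inv_mult_group)
  then show ?thesis unfolding reflections_def using g a by blast
qed

lemma refl_conj': 
  assumes r: "r \<in> reflections V m" and a: "a \<in> carrier (cox_group V m)"
  shows "inv\<^bsub>cox_group V m\<^esub> a \<otimes>\<^bsub>cox_group V m\<^esub> r \<otimes>\<^bsub>cox_group V m\<^esub> a \<in> reflections V m"
  using refl_conj[OF r group.inv_closed[OF cox_group_group a]] group.inv_inv[OF cox_group_group a] by simp



lemma knot_group_group: "group (knot_group cr)"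
  unfolding knot_group_def by (rule presented_group_group)

lemma strands_iff: "s \<in> strands cr \<longleftrightarrow> s < num_strands cr"
  by (simp add: strands_def)

lemma crossing_strands:
  assumes D: "knot_diagram cr" and c: "(ov, u1, u2) \<in> crossings cr"
  shows "ov \<in> strands cr" "u1 \<in> strands cr" "u2 \<in> strands cr"
    "\<exists>i < length cr. ov = fst (cr ! i) \<and> u1 = i \<and> u2 = Suc i mod length cr"
proof -
  obtain i where i: "i < length cr" "ov = fst (cr ! i)" "u1 = i" "u2 = Suc i mod length cr"
    using c unfolding crossings_def by blast
  then show "\<exists>i < length cr. ov = fst (cr ! i) \<and> u1 = i \<and> u2 = Suc i mod length cr" by blast
  show "ov \<in> strands cr" using D i nth_mem[OF i(1)] unfolding knot_diagram_def strands_iff by auto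
  show "u1 \<in> strands cr" using i unfolding strands_iff num_strands_def by auto
  have "0 < length cr" using i(1) by linarith
  then have "u2 < length cr" using i mod_less_divisor by simp
  then show "u2 \<in> strands cr" unfolding strands_iff num_strands_def by auto
qed

lemma move_strands:
  assumes D: "knot_diagram cr" and c: "(ov, u1, u2) \<in> moves cr"
  shows "ov \<in> strands cr" "u1 \<in> strands cr" "u2 \<in> strands cr"
  using c crossing_strands[OF D] unfolding moves_def by blast+

lemma wirt_eq:
  assumes D: "knot_diagram cr" and i: "i < length cr"
  shows "pres_eq (strands cr) (wirt_rels cr) [(Suc i mod length cr, True)]
           [(fst (cr ! i), snd (cr ! i)), (i, True), (fst (cr ! i), \<not> snd (cr ! i))]"
proof -
  let ?j = "Suc i mod length cr"
  let ?rest = "[(fst (cr ! i), snd (cr ! i)), (i, True), (fst (cr ! i), \<not> snd (cr ! i))]"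
  let ?r = "(?j, False) # ?rest"
  have r: "?r \<in> wirt_rels cr" unfolding wirt_rels_def using i by auto
  have "0 < length cr" using i(1) by linarith
  then have "?j < length cr" using mod_less_divisor by blast
  then have j: "?j \<in> strands cr" unfolding strands_iff num_strands_def by auto
  have 1: "pres_step (strands cr) (wirt_rels cr) ([(?j, True)] @ ?r) [(?j, True)]"
    unfolding pres_step_def using r by (metis append_Nil2)
  have 2: "pres_step (strands cr) (wirt_rels cr) ([(?j, True)] @ ?r) ?rest"
    unfolding pres_step_def using j
    by (rule_tac x="[]" in exI, rule_tac x="?rest" in exI) auto
  show ?thesis using pres_step_eq[OF 1] pres_step_eq[OF 2]
    by (meson pres_eq_sym pres_eq_trans)
qed

abbreviation xg :: "(nat \<times> bool) list \<Rightarrow> nat \<Rightarrow> (nat \<times> bool) list set" where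
  "xg cr s \<equiv> pres_class (strands cr) (wirt_rels cr) [(s, True)]"

lemma xg_carrier: "s \<in> strands cr \<Longrightarrow> pres_class (strands cr) (wirt_rels cr) [(s, b)] \<in> carrier (knot_group cr)"
  unfolding knot_group_def presented_group_carrier by auto

lemma xg_False: "s \<in> strands cr \<Longrightarrow> pres_class (strands cr) (wirt_rels cr) [(s, False)] = inv\<^bsub>knot_group cr\<^esub> xg cr s"
  unfolding knot_group_def by (subst pres_class_inv) (auto simp: winv_def)

lemma xg_crossing:
  assumes D: "knot_diagram cr" and i: "i < length cr"
  shows "xg cr (Suc i mod length cr) =
    pres_class (strands cr) (wirt_rels cr) [(fst (cr ! i), snd (cr ! i))] \<otimes>\<^bsub>knot_group cr\<^esub> xg cr i
     \<otimes>\<^bsub>knot_group cr\<^esub> pres_class (strands cr) (wirt_rels cr) [(fst (cr ! i), \<not> snd (cr ! i))]"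
  unfolding knot_group_def pres_class_mult pres_class_eq_iff using wirt_eq[OF D i] by simp

lemma xg_meridian: "s \<in> strands cr \<Longrightarrow> xg cr s \<in> meridians cr"
proof -
  interpret K: group "knot_group cr" by (rule knot_group_group)
  assume s: "s \<in> strands cr"
  have "xg cr s = \<one>\<^bsub>knot_group cr\<^esub> \<otimes>\<^bsub>knot_group cr\<^esub> xg cr s \<otimes>\<^bsub>knot_group cr\<^esub> inv\<^bsub>knot_group cr\<^esub> \<one>\<^bsub>knot_group cr\<^esub>"
    using xg_carrier[OF s] by simp
  then show ?thesis unfolding meridians_def using s by blast
qed

definition thirds :: "(nat \<times> nat \<times> nat) list \<Rightarrow> nat set" where
  "thirds \<sigma> = set (map (\<lambda>(ov, u1, u2). u2) \<sigma>)"

lemma valid_seq_closure: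
  "valid_seq cr W \<sigma> \<Longrightarrow> W \<subseteq> A \<Longrightarrow>
   (\<And>ov u1 u2. (ov, u1, u2) \<in> moves cr \<Longrightarrow> ov \<in> A \<Longrightarrow> u1 \<in> A \<Longrightarrow> u2 \<in> A) \<Longrightarrow>
   W \<union> thirds \<sigma> \<subseteq> A"
proof (induction \<sigma> arbitrary: W)
  case Nil then show ?case by (simp add: thirds_def)
next
  case (Cons a \<sigma>)
  obtain ov u1 u2 where a: "a = (ov, u1, u2)" by (cases a) auto
  have v: "(ov, u1, u2) \<in> moves cr" "ov \<in> W" "u1 \<in> W" "valid_seq cr (insert u2 W) \<sigma>"
    using Cons.prems(1) a by auto
  have "u2 \<in> A" using Cons.prems(2,3) v by blast
  then have "insert u2 W \<union> thirds \<sigma> \<subseteq> A" using Cons.IH[OF v(4)] Cons.prems(2,3) by blast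
  then show ?case using a by (auto simp: thirds_def)
qed

lemma extend_preserve:
  "valid_seq cr W \<sigma> \<Longrightarrow> s \<in> W \<Longrightarrow> extend_labels H L \<sigma> s = L s"
proof (induction \<sigma> arbitrary: W L)
  case Nil then show ?case by simp
next
  case (Cons a \<sigma>)
  obtain ov u1 u2 where a: "a = (ov, u1, u2)" by (cases a) auto
  have v: "u2 \<notin> W" "valid_seq cr (insert u2 W) \<sigma>" using Cons.prems(1) a by auto
  show ?case using Cons.IH[OF v(2)] Cons.prems(2) v(1) a by auto
qed

lemma extend_agree:
  "valid_seq cr W \<sigma> \<Longrightarrow> (\<forall>s\<in>W. L s = \<rho> s) \<Longrightarrow>
   (\<And>ov u1 u2. (ov, u1, u2) \<in> moves cr \<Longrightarrow> \<rho> u2 = \<rho> ov \<otimes>\<^bsub>H\<^esub> \<rho> u1 \<otimes>\<^bsub>H\<^esub> \<rho> ov) \<Longrightarrow>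
   s \<in> W \<union> thirds \<sigma> \<Longrightarrow> extend_labels H L \<sigma> s = \<rho> s"
proof (induction \<sigma> arbitrary: W L)
  case Nil then show ?case by (simp add: thirds_def)
next
  case (Cons a \<sigma>)
  obtain ov u1 u2 where a: "a = (ov, u1, u2)" by (cases a) auto
  have v: "(ov, u1, u2) \<in> moves cr" "ov \<in> W" "u1 \<in> W" "valid_seq cr (insert u2 W) \<sigma>"
    using Cons.prems(1) a by auto
  let ?L = "L(u2 := L ov \<otimes>\<^bsub>H\<^esub> L u1 \<otimes>\<^bsub>H\<^esub> L ov)"
  have "\<forall>s\<in>insert u2 W. ?L s = \<rho> s" using Cons.prems(2,3) v by auto
  moreover have "s \<in> insert u2 W \<union> thirds \<sigma>" using Cons.prems(4) a by (auto simp: thirds_def)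
  ultimately have "extend_labels H ?L \<sigma> s = \<rho> s" using Cons.IH[OF v(4)] Cons.prems(3) by blast
  then show ?case using a by simp
qed



lemma search_imp_surj:
  assumes D: "knot_diagram cr" and seq: "complete_seq cr E \<sigma>"
    and Agen: "\<A> \<subseteq> Gen_sets (cox_group V m) (reflections V m)"
    and S: "search_succeeds cr E \<sigma> V m \<A>"
  shows "\<exists>h. good_surj cr V m h"
proof -
  let ?C = "cox_group V m"
  let ?K = "knot_group cr"
  interpret C: group ?C by (rule cox_group_group)
  interpret K: group ?K by (rule knot_group_group)
  obtain R f where R: "R \<in> \<A>" and f: "bij_betw f E R"
    and col: "is_coloring ?C (reflections V m) cr
          (extend_labels ?C (\<lambda>s. if s \<in> E then f s else \<one>\<^bsub>?C\<^esub>) \<sigma>)"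
    using S unfolding search_succeeds_def by blast
  define L where "L = extend_labels ?C (\<lambda>s. if s \<in> E then f s else \<one>\<^bsub>?C\<^esub>) \<sigma>"
  have Lrefl: "\<And>s. s \<in> strands cr \<Longrightarrow> L s \<in> reflections V m"
    using col unfolding is_coloring_def L_def by blast
  have Lcross: "\<And>ov u1 u2. (ov, u1, u2) \<in> crossings cr \<Longrightarrow>
      L ov \<otimes>\<^bsub>?C\<^esub> L u1 \<otimes>\<^bsub>?C\<^esub> inv\<^bsub>?C\<^esub> (L ov) = L u2"
    using col unfolding is_coloring_def L_def by fast
  define \<phi> where "\<phi> = (\<lambda>x. if x \<in> strands cr then L x else \<one>\<^bsub>?C\<^esub>)"
  have phi: "\<And>x. \<phi> x \<in> carrier ?C"
    unfolding \<phi>_def using Lrefl refl_carrier by auto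
  have phi_inv: "\<And>x. inv\<^bsub>?C\<^esub> (\<phi> x) = \<phi> x"
    unfolding \<phi>_def using Lrefl refl_inv by auto
  have rel: "\<And>r. r \<in> wirt_rels cr \<Longrightarrow> evalw ?C \<phi> r = \<one>\<^bsub>?C\<^esub>"
  proof -
    fix r assume "r \<in> wirt_rels cr"
    then obtain i where i: "i < length cr" and r: "r = [(Suc i mod length cr, False), (fst (cr ! i), snd (cr ! i)), (i, True),
                    (fst (cr ! i), \<not> snd (cr ! i))]"
      unfolding wirt_rels_def by blast
    let ?o = "fst (cr ! i)" and ?j = "Suc i mod length cr"
    have c: "(?o, i, ?j) \<in> crossings cr" unfolding crossings_def using i by blast
    have st: "?o \<in> strands cr" "i \<in> strands cr" "?j \<in> strands cr"
      using crossing_strands[OF D c] by auto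
    have "L ?o \<otimes>\<^bsub>?C\<^esub> L i \<otimes>\<^bsub>?C\<^esub> inv\<^bsub>?C\<^esub> (L ?o) = L ?j" by (rule Lcross[OF c])
    then have j: "\<phi> ?j = \<phi> ?o \<otimes>\<^bsub>?C\<^esub> \<phi> i \<otimes>\<^bsub>?C\<^esub> \<phi> ?o"
      using st refl_inv[OF Lrefl[OF st(1)]] unfolding \<phi>_def by simp
    have "evalw ?C \<phi> r = inv\<^bsub>?C\<^esub> (\<phi> ?j) \<otimes>\<^bsub>?C\<^esub> (\<phi> ?o \<otimes>\<^bsub>?C\<^esub> (\<phi> i \<otimes>\<^bsub>?C\<^esub> (\<phi> ?o \<otimes>\<^bsub>?C\<^esub> \<one>\<^bsub>?C\<^esub>)))"
    proof -
      obtain ov e where oe: "cr ! i = (ov, e)" by force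
      show ?thesis unfolding r oe using phi_inv by (cases e) simp_all
    qed
    also have "\<dots> = inv\<^bsub>?C\<^esub> (\<phi> ?j) \<otimes>\<^bsub>?C\<^esub> \<phi> ?j"
      unfolding j using phi by (simp add: C.m_assoc)
    also have "\<dots> = \<one>\<^bsub>?C\<^esub>" using phi by simp
    finally show "evalw ?C \<phi> r = \<one>\<^bsub>?C\<^esub>" .
  qed
  define h where "h = C.ind_hom \<phi>"
  have hom: "h \<in> hom ?K ?C"
    unfolding h_def knot_group_def by (rule C.ind_hom_hom[OF phi rel])
  have hcl: "\<And>w. h (pres_class (strands cr) (wirt_rels cr) w) = evalw ?C \<phi> w"
    unfolding h_def by (rule C.ind_hom_class[OF phi rel])
  interpret hK: group_hom ?K ?C h
    by (simp add: group_hom_def group_hom_axioms_def knot_group_group cox_group_group hom)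
  have hgen: "\<And>s b. s \<in> strands cr \<Longrightarrow> h (pres_class (strands cr) (wirt_rels cr) [(s, b)]) = L s"
  proof -
    fix s b assume s: "s \<in> strands cr"
    have "h (pres_class (strands cr) (wirt_rels cr) [(s, b)]) = (if b then \<phi> s else inv\<^bsub>?C\<^esub> \<phi> s) \<otimes>\<^bsub>?C\<^esub> \<one>\<^bsub>?C\<^esub>"
      using hcl by simp
    also have "\<dots> = \<phi> s" using phi phi_inv by simp
    also have "\<dots> = L s" using s by (simp add: \<phi>_def)
    finally show "h (pres_class (strands cr) (wirt_rels cr) [(s, b)]) = L s" .
  qed
  have mer: "h ` meridians cr \<subseteq> reflections V m"
  proof
    fix y assume "y \<in> h ` meridians cr"
    then obtain g s b where g: "g \<in> carrier ?K" and s: "s \<in> strands cr"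
      and y: "y = h (g \<otimes>\<^bsub>?K\<^esub> pres_class (strands cr) (wirt_rels cr) [(s, b)] \<otimes>\<^bsub>?K\<^esub> inv\<^bsub>?K\<^esub> g)"
      unfolding meridians_def by blast
    have "y = h g \<otimes>\<^bsub>?C\<^esub> L s \<otimes>\<^bsub>?C\<^esub> inv\<^bsub>?C\<^esub> (h g)"
      unfolding y using g xg_carrier[OF s] hgen[OF s] by simp
    then show "y \<in> reflections V m" using refl_conj[OF Lrefl[OF s]] g by simp
  qed
  have RGen: "R \<in> Gen_sets ?C (reflections V m)" using R Agen by blast
  have vs: "valid_seq cr E \<sigma>" and Es: "E \<subseteq> strands cr" using seq unfolding complete_seq_def by auto
  have "R \<subseteq> h ` carrier ?K"
  proof
    fix r assume "r \<in> R"
    then obtain e where e: "e \<in> E" "r = f e" using f unfolding bij_betw_def by blast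
    have "L e = f e" unfolding L_def
      using extend_preserve[OF vs e(1), of ?C "\<lambda>s. if s \<in> E then f s else \<one>\<^bsub>?C\<^esub>"] e(1) by simp
    then have "h (xg cr e) = r" using hgen[of e True] Es e by auto
    then show "r \<in> h ` carrier ?K" using xg_carrier[of e cr True] Es e by blast
  qed
  then have "generate ?C R \<subseteq> h ` carrier ?K"
    by (rule C.generate_subgroup_incl[OF _ hK.img_is_subgroup])
  moreover have "generate ?C R = carrier ?C" using RGen unfolding Gen_sets_def by blast
  ultimately have "h ` carrier ?K = carrier ?C" using hK.hom_closed by blast
  then show ?thesis using hom mer unfolding good_surj_def by blast
qed



lemma surj_imp_search:
  assumes D: "knot_diagram cr" and seq: "complete_seq cr E \<sigma>"
    and Efin: "finite E"
    and Ecard: "card E = coxeter_rank (cox_group V m) (reflections V m)"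
    and rob: "robust (cox_group V m) (reflections V m) \<A>"
    and gs: "good_surj cr V m h"
  shows "search_succeeds cr E \<sigma> V m \<A>"
proof -
  let ?C = "cox_group V m"
  let ?K = "knot_group cr"
  let ?Rf = "reflections V m"
  interpret C: group ?C by (rule cox_group_group)
  interpret K: group ?K by (rule knot_group_group)
  have hom: "h \<in> hom ?K ?C" and mer: "h ` meridians cr \<subseteq> ?Rf"
    and surj: "h ` carrier ?K = carrier ?C" using gs unfolding good_surj_def by auto
  interpret hK: group_hom ?K ?C h
    by (simp add: group_hom_def group_hom_axioms_def knot_group_group cox_group_group hom)
  define \<rho> where "\<rho> s = h (xg cr s)" for s
  have \<rho>refl: "\<And>s. s \<in> strands cr \<Longrightarrow> \<rho> s \<in> ?Rf"
    unfolding \<rho>_def using mer xg_meridian by blast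
  have \<rho>car: "\<And>s. s \<in> strands cr \<Longrightarrow> \<rho> s \<in> carrier ?C"
    using \<rho>refl refl_carrier by blast
  have hb: "\<And>s b. s \<in> strands cr \<Longrightarrow> h (pres_class (strands cr) (wirt_rels cr) [(s, b)]) = \<rho> s"
  proof -
    fix s b assume s: "s \<in> strands cr"
    show "h (pres_class (strands cr) (wirt_rels cr) [(s, b)]) = \<rho> s"
    proof (cases b)
      case True then show ?thesis by (simp add: \<rho>_def)
    next
      case False
      then have "h (pres_class (strands cr) (wirt_rels cr) [(s, b)]) = inv\<^bsub>?C\<^esub> (\<rho> s)"
        using xg_False[OF s] xg_carrier[OF s] by (simp add: \<rho>_def)
      then show ?thesis using refl_inv[OF \<rho>refl[OF s]] by simp
    qed
  qed
  have \<rho>cross: "\<And>ov u1 u2. (ov, u1, u2) \<in> crossings cr \<Longrightarrow> \<rho> u2 = \<rho> ov \<otimes>\<^bsub>?C\<^esub> \<rho> u1 \<otimes>\<^bsub>?C\<^esub> \<rho> ov"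
  proof -
    fix ov u1 u2 assume c: "(ov, u1, u2) \<in> crossings cr"
    note st = crossing_strands[OF D c]
    obtain i where i: "i < length cr" "ov = fst (cr ! i)" "u1 = i" "u2 = Suc i mod length cr"
      using st(4) by blast
    define e where "e = snd (cr ! i)"
    have "xg cr u2 = pres_class (strands cr) (wirt_rels cr) [(ov, e)] \<otimes>\<^bsub>?K\<^esub> xg cr u1
        \<otimes>\<^bsub>?K\<^esub> pres_class (strands cr) (wirt_rels cr) [(ov, \<not> e)]"
      unfolding i(2,3,4) e_def by (rule xg_crossing[OF D i(1)])
    then have "h (xg cr u2) = h (pres_class (strands cr) (wirt_rels cr) [(ov, e)]) \<otimes>\<^bsub>?C\<^esub> h (xg cr u1)
        \<otimes>\<^bsub>?C\<^esub> h (pres_class (strands cr) (wirt_rels cr) [(ov, \<not> e)])"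
      using xg_carrier[OF st(1)] xg_carrier[OF st(2)] by (simp only: hK.hom_mult K.m_closed)
    then show "\<rho> u2 = \<rho> ov \<otimes>\<^bsub>?C\<^esub> \<rho> u1 \<otimes>\<^bsub>?C\<^esub> \<rho> ov"
      unfolding hb[OF st(1)] by (simp only: \<rho>_def)
  qed
  have \<rho>move: "\<And>ov u1 u2. (ov, u1, u2) \<in> moves cr \<Longrightarrow> \<rho> u2 = \<rho> ov \<otimes>\<^bsub>?C\<^esub> \<rho> u1 \<otimes>\<^bsub>?C\<^esub> \<rho> ov"
  proof -
    fix ov u1 u2 assume mv: "(ov, u1, u2) \<in> moves cr"
    note st = move_strands[OF D mv]
    show "\<rho> u2 = \<rho> ov \<otimes>\<^bsub>?C\<^esub> \<rho> u1 \<otimes>\<^bsub>?C\<^esub> \<rho> ov"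
    proof (cases "(ov, u1, u2) \<in> crossings cr")
      case True then show ?thesis by (rule \<rho>cross)
    next
      case False
      then have "(ov, u2, u1) \<in> crossings cr" using mv unfolding moves_def by blast
      then have "\<rho> u1 = \<rho> ov \<otimes>\<^bsub>?C\<^esub> \<rho> u2 \<otimes>\<^bsub>?C\<^esub> \<rho> ov" by (rule \<rho>cross)
      then show ?thesis
        using C.invol_flip[OF \<rho>car[OF st(1)] \<rho>car[OF st(2)] \<rho>car[OF st(3)] refl_invol[OF \<rho>refl[OF st(1)]]]
        by blast
    qed
  qed
  have vs: "valid_seq cr E \<sigma>" and Es: "E \<subseteq> strands cr" and cov: "E \<union> thirds \<sigma> = strands cr"
    using seq unfolding complete_seq_def thirds_def by auto
  define T where "T = \<rho> ` E"
  have Tsub: "T \<subseteq> ?Rf" unfolding T_def using \<rho>refl Es by blast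
  have Tcar: "T \<subseteq> carrier ?C" using Tsub refl_carrier by blast
  have "E \<union> thirds \<sigma> \<subseteq> {s. \<rho> s \<in> generate ?C T}"
  proof (rule valid_seq_closure[OF vs])
    show "E \<subseteq> {s. \<rho> s \<in> generate ?C T}" unfolding T_def by (auto intro: generate.incl)
  next
    fix ov u1 u2 assume "(ov, u1, u2) \<in> moves cr" "ov \<in> {s. \<rho> s \<in> generate ?C T}" "u1 \<in> {s. \<rho> s \<in> generate ?C T}"
    then show "u2 \<in> {s. \<rho> s \<in> generate ?C T}" using \<rho>move by (auto intro: generate.eng)
  qed
  then have stgen: "\<And>s. s \<in> strands cr \<Longrightarrow> \<rho> s \<in> generate ?C T" using cov by blast
  have wgen: "w \<in> lists (strands cr \<times> UNIV) \<Longrightarrow> h (pres_class (strands cr) (wirt_rels cr) w) \<in> generate ?C T" for w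
  proof (induction w)
    case Nil
    have "pres_class (strands cr) (wirt_rels cr) [] = \<one>\<^bsub>?K\<^esub>"
      unfolding knot_group_def presented_group_one ..
    then show ?case by (simp add: generate.one)
  next
    case (Cons a w)
    obtain s b where a: "a = (s, b)" by force
    have s: "s \<in> strands cr" and w: "w \<in> lists (strands cr \<times> UNIV)" using Cons.prems a by auto
    have "pres_class (strands cr) (wirt_rels cr) (a # w) =
        pres_class (strands cr) (wirt_rels cr) [(s, b)] \<otimes>\<^bsub>?K\<^esub> pres_class (strands cr) (wirt_rels cr) w"
      unfolding knot_group_def pres_class_mult a by simp
    moreover have "pres_class (strands cr) (wirt_rels cr) w \<in> carrier ?K"
      unfolding knot_group_def presented_group_carrier using w by blast
    ultimately have "h (pres_class (strands cr) (wirt_rels cr) (a # w)) =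
        \<rho> s \<otimes>\<^bsub>?C\<^esub> h (pres_class (strands cr) (wirt_rels cr) w)"
      using xg_carrier[OF s] hb[OF s] by simp
    then show ?case using Cons.IH[OF w] stgen[OF s] by (simp add: generate.eng)
  qed
  have "carrier ?C \<subseteq> generate ?C T"
  proof
    fix y assume "y \<in> carrier ?C"
    then obtain k where "k \<in> carrier ?K" "y = h k" using surj by blast
    then obtain w where "w \<in> lists (strands cr \<times> UNIV)" "y = h (pres_class (strands cr) (wirt_rels cr) w)"
      unfolding knot_group_def presented_group_carrier by blast
    then show "y \<in> generate ?C T" using wgen by blast
  qed
  then have Tgen: "generate ?C T = carrier ?C" using C.generate_incl[OF Tcar] by blast
  have Tfin: "finite T" unfolding T_def using Efin by simp
  have "coxeter_rank ?C ?Rf \<le> card T"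
    unfolding coxeter_rank_def by (rule Least_le) (use Tsub Tfin Tgen in blast)
  moreover have "card T \<le> card E" unfolding T_def using Efin by (rule card_image_le)
  ultimately have cT: "card T = card E" "card T = coxeter_rank ?C ?Rf" using Ecard by auto
  have injE: "inj_on \<rho> E" using eq_card_imp_inj_on[OF Efin] cT(1) unfolding T_def by blast
  have "T \<in> Gen_sets ?C ?Rf" unfolding Gen_sets_def using Tsub Tfin cT Tgen by blast
  then obtain R2 g where R2: "R2 \<in> \<A>" and g: "g \<in> carrier ?C"
    and R2eq: "(\<lambda>r. inv\<^bsub>?C\<^esub> g \<otimes>\<^bsub>?C\<^esub> r \<otimes>\<^bsub>?C\<^esub> g) ` T = R2"
    using rob unfolding robust_def gen_equiv_def by blast
  define rr where "rr s = inv\<^bsub>?C\<^esub> g \<otimes>\<^bsub>?C\<^esub> \<rho> s \<otimes>\<^bsub>?C\<^esub> g" for s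
  have hback: "\<And>s. s \<in> strands cr \<Longrightarrow> \<rho> s = g \<otimes>\<^bsub>?C\<^esub> rr s \<otimes>\<^bsub>?C\<^esub> inv\<^bsub>?C\<^esub> g"
    unfolding rr_def using g \<rho>car by (simp add: C.m_assoc C.cancel_aux)
  have bij: "bij_betw rr E R2"
  proof (rule bij_betw_imageI)
    show "inj_on rr E"
    proof (rule inj_onI)
      fix x y assume "x \<in> E" "y \<in> E" "rr x = rr y"
      then have "\<rho> x = \<rho> y" using hback Es by (metis subsetD)
      then show "x = y" using injE \<open>x \<in> E\<close> \<open>y \<in> E\<close> by (meson inj_onD)
    qed
    show "rr ` E = R2" unfolding R2eq[symmetric] T_def image_image rr_def ..
  qed
  have rrrefl: "\<And>s. s \<in> strands cr \<Longrightarrow> rr s \<in> ?Rf"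
    unfolding rr_def using refl_conj' \<rho>refl g by blast
  have rrmove: "\<And>ov u1 u2. (ov, u1, u2) \<in> moves cr \<Longrightarrow> rr u2 = rr ov \<otimes>\<^bsub>?C\<^esub> rr u1 \<otimes>\<^bsub>?C\<^esub> rr ov"
  proof -
    fix ov u1 u2 assume mv: "(ov, u1, u2) \<in> moves cr"
    note st = move_strands[OF D mv]
    show "rr u2 = rr ov \<otimes>\<^bsub>?C\<^esub> rr u1 \<otimes>\<^bsub>?C\<^esub> rr ov"
      unfolding rr_def \<rho>move[OF mv]
      by (rule C.conj_mult3[OF \<rho>car[OF st(1)] \<rho>car[OF st(2)] \<rho>car[OF st(1)] g])
  qed
  define L where "L = extend_labels ?C (\<lambda>s. if s \<in> E then rr s else \<one>\<^bsub>?C\<^esub>) \<sigma>"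
  have Lag: "\<And>s. s \<in> strands cr \<Longrightarrow> L s = rr s"
  proof -
    fix s assume "s \<in> strands cr"
    then have mem: "s \<in> E \<union> thirds \<sigma>" using cov by blast
    show "L s = rr s" unfolding L_def
      by (rule extend_agree[OF vs _ rrmove mem]) simp
  qed
  have "is_coloring ?C ?Rf cr L"
    unfolding is_coloring_def
  proof (intro conjI ballI)
    fix s assume "s \<in> strands cr" then show "L s \<in> ?Rf" using Lag rrrefl by simp
  next
    fix c assume c: "c \<in> crossings cr"
    obtain ov u1 u2 where c': "c = (ov, u1, u2)" by (cases c) auto
    have cc: "(ov, u1, u2) \<in> crossings cr" using c c' by simp
    note st = crossing_strands[OF D cc]
    have mv: "(ov, u1, u2) \<in> moves cr" using cc unfolding moves_def by blast
    have "L ov \<otimes>\<^bsub>?C\<^esub> L u1 \<otimes>\<^bsub>?C\<^esub> inv\<^bsub>?C\<^esub> (L ov) = L u2"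
      using Lag[OF st(1)] Lag[OF st(2)] Lag[OF st(3)] refl_inv[OF rrrefl[OF st(1)]] rrmove[OF mv]
      by simp
    then show "case c of (ov, u1, u2) \<Rightarrow> L ov \<otimes>\<^bsub>?C\<^esub> L u1 \<otimes>\<^bsub>?C\<^esub> inv\<^bsub>?C\<^esub> (L ov) = L u2"
      using c' by simp
  qed
  then show ?thesis unfolding search_succeeds_def L_def using R2 bij by blast
qed


theorem mainTheorem1:
  fixes cr :: "(nat \<times> bool) list"
    and E :: "nat set"
    and \<sigma> :: "(nat \<times> nat \<times> nat) list"
    and \<A> :: "nat set \<Rightarrow> (nat \<Rightarrow> nat \<Rightarrow> nat) \<Rightarrow> (nat \<times> bool) list set set set"
  assumes D: "knot_diagram cr"
    and E_fin: "finite E"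
    and E_card: "card E = wirtinger_number cr"
    and seq: "complete_seq cr E \<sigma>"
    and rob: "\<And>V m. coxeter_graph V m \<Longrightarrow> finite (carrier (cox_group V m)) \<Longrightarrow>
               coxeter_rank (cox_group V m) (reflections V m) = wirtinger_number cr \<Longrightarrow>
               robust (cox_group V m) (reflections V m) (\<A> V m)"
  shows "((\<exists>V m. coxeter_graph V m \<and> finite (carrier (cox_group V m)) \<and>
              coxeter_rank (cox_group V m) (reflections V m) = wirtinger_number cr \<and>
              (\<exists>h. good_surj cr V m h))
          \<longleftrightarrow>
          (\<exists>V m. coxeter_graph V m \<and> finite (carrier (cox_group V m)) \<and>
              coxeter_rank (cox_group V m) (reflections V m) = wirtinger_number cr \<and>
              search_succeeds cr E \<sigma> V m (\<A> V m)))
       \<and> (\<forall>V m. coxeter_graph V m \<and> finite (carrier (cox_group V m)) \<and>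
              coxeter_rank (cox_group V m) (reflections V m) = wirtinger_number cr \<longrightarrow>
              (search_succeeds cr E \<sigma> V m (\<A> V m) \<longleftrightarrow> (\<exists>h. good_surj cr V m h)))"
proof -
  have key: "search_succeeds cr E \<sigma> V m (\<A> V m) \<longleftrightarrow> (\<exists>h. good_surj cr V m h)"
    if c: "coxeter_graph V m \<and> finite (carrier (cox_group V m)) \<and>
              coxeter_rank (cox_group V m) (reflections V m) = wirtinger_number cr" for V m
  proof -
    have r: "robust (cox_group V m) (reflections V m) (\<A> V m)" using rob c by blast
    have Agen: "\<A> V m \<subseteq> Gen_sets (cox_group V m) (reflections V m)" using r unfolding robust_def by blast
    have Ec: "card E = coxeter_rank (cox_group V m) (reflections V m)" using E_card c by simp
    show ?thesis
      using search_imp_surj[OF D seq Agen] surj_imp_search[OF D seq E_fin Ec r] by blast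
  qed
  then show ?thesis by blast
qed

end
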